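(* Let $(T_0,\widetilde T_0)$ be a joint pair of closed abstract Friedrichs operators on a complex Hilbert space $\mathcal{H}$, with $T_1:=\widetilde T_0^*$, $\widetilde T_1:=T_0^*$, $\mathcal{W}_0:=\operatorname{dom}T_0=\operatorname{dom}\widetilde T_0$ and $\mathcal{W}:=\operatorname{dom}T_1=\operatorname{dom}\widetilde T_1$. Define on $\mathcal{W}$ the sesquilinear form $[u\mid v]:=\langle T_1u,v\rangle-\langle u,\widetilde T_1 v\rangle$, and for $S\subseteq\mathcal{W}$ let $S^{[\perp]}:=\{u\in\mathcal{W}: [u\mid v]=0 \text{ for all } v\in S\}$. Then $$\bigl(\mathcal{W}_0\dotplus\operatorname{ker}T_1\dotplus\operatorname{ker}\widetilde T_1\bigr)^{[\perp][\perp]}=\mathcal{W}.$$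
   Context: $\mathcal{H}$ is a complex Hilbert space with inner product $\langle\cdot,\cdot\rangle$ (linear in the first argument) and norm $\|\cdot\|$. A pair $(T,\widetilde T)$ of densely defined linear operators on $\mathcal{H}$ is a joint pair of abstract Friedrichs operators if: (T1) $T$ and $\widetilde T$ have a common dense domain $\mathcal{D}$ and $\langle T\varphi,\psi\rangle=\langle\varphi,\widetilde T\psi\rangle$ for all $\varphi,\psi\in\mathcal{D}$; (T2) there is $c>0$ with $\|(T+\widetilde T)\varphi\|\le c\|\varphi\|$ for all $\varphi\in\mathcal{D}$; (T3) there is $\mu_0>0$ with $\langle (T+\widetilde T)\varphi,\varphi\rangle\ge 2\mu_0\|\varphi\|^2$ for all $\varphi\in\mathcal{D}$. A joint pair of closed abstract Friedrichs operators is such a pair $(T_0,\widetilde T_0)$ in which both operators are closed. One has $T_0\subseteq T_1$, $\widetilde T_0\subseteq\widetilde T_1$, $\operatorname{dom}T_1=\operatorname{dom}\widetilde T_1$, and the sum $\mathcal{W}_0+\operatorname{ker}T_1+\operatorname{ker}\widetilde T_1$ is direct. *)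

theory Defs
  imports "HOL-Analysis.Analysis"
begin

text \<open>Completeness is the
library class banach.\<close>

class complex_inner = real_normed_vector +
  fixes scaleC :: "complex \<Rightarrow> 'a \<Rightarrow> 'a"
    and cinner :: "'a \<Rightarrow> 'a \<Rightarrow> complex"
  assumes scaleC_add_right: "scaleC a (x + y) = scaleC a x + scaleC a y"
    and scaleC_add_left: "scaleC (a + b) x = scaleC a x + scaleC b x"
    and scaleC_scaleC: "scaleC a (scaleC b x) = scaleC (a * b) x"
    and scaleC_one: "scaleC 1 x = x"
    and scaleR_scaleC: "scaleR r x = scaleC (complex_of_real r) x"
    and cinner_add_left: "cinner (x + y) z = cinner x z + cinner y z"
    and cinner_scaleC_left: "cinner (scaleC a x) y = a * cinner x y"
    and cinner_commute: "cinner x y = cnj (cinner y x)"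
    and cinner_ge_zero: "0 \<le> Re (cinner x x)"
    and cinner_eq_zero_iff: "cinner x x = 0 \<longleftrightarrow> x = 0"
    and norm_eq_sqrt_cinner: "norm x = sqrt (Re (cinner x x))"

text \<open>A (possibly unbounded) operator is a pair of a domain D and a function T
(whose values outside D are irrelevant).\<close>

definition csubspace :: "'a::complex_inner set \<Rightarrow> bool" where
  "csubspace S \<longleftrightarrow> 0 \<in> S \<and> (\<forall>x\<in>S. \<forall>y\<in>S. x + y \<in> S) \<and> (\<forall>c. \<forall>x\<in>S. scaleC c x \<in> S)"

definition clinear_op :: "'a::complex_inner set \<Rightarrow> ('a \<Rightarrow> 'a) \<Rightarrow> bool" where
  "clinear_op D T \<longleftrightarrow> csubspace D \<and> (\<forall>x\<in>D. \<forall>y\<in>D. T (x + y) = T x + T y)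
     \<and> (\<forall>c. \<forall>x\<in>D. T (scaleC c x) = scaleC c (T x))"

definition densely_defined :: "'a::complex_inner set \<Rightarrow> bool" where
  "densely_defined D \<longleftrightarrow> closure D = UNIV"

definition closed_op :: "'a::complex_inner set \<Rightarrow> ('a \<Rightarrow> 'a) \<Rightarrow> bool" where
  "closed_op D T \<longleftrightarrow> closed {(x, T x) | x. x \<in> D}"

definition adj_dom :: "'a::complex_inner set \<Rightarrow> ('a \<Rightarrow> 'a) \<Rightarrow> 'a set" where
  "adj_dom D T = {v. \<exists>w. \<forall>u\<in>D. cinner (T u) v = cinner u w}"

definition adj :: "'a::complex_inner set \<Rightarrow> ('a \<Rightarrow> 'a) \<Rightarrow> 'a \<Rightarrow> 'a" where
  "adj D T v = (THE w. \<forall>u\<in>D. cinner (T u) v = cinner u w)"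

definition op_kernel :: "'a::complex_inner set \<Rightarrow> ('a \<Rightarrow> 'a) \<Rightarrow> 'a set" where
  "op_kernel D T = {u \<in> D. T u = 0}"

definition joint_pair_AFO :: "'a::complex_inner set \<Rightarrow> ('a \<Rightarrow> 'a) \<Rightarrow> ('a \<Rightarrow> 'a) \<Rightarrow> bool" where
  "joint_pair_AFO D T Tt \<longleftrightarrow>
     clinear_op D T \<and> clinear_op D Tt \<and> densely_defined D \<and>
     (\<forall>\<phi>\<in>D. \<forall>\<psi>\<in>D. cinner (T \<phi>) \<psi> = cinner \<phi> (Tt \<psi>)) \<and>
     (\<exists>c>0. \<forall>\<phi>\<in>D. norm (T \<phi> + Tt \<phi>) \<le> c * norm \<phi>) \<and>
     (\<exists>\<mu>0>0. \<forall>\<phi>\<in>D. Re (cinner (T \<phi> + Tt \<phi>) \<phi>) \<ge> 2 * \<mu>0 * (norm \<phi>)\<^sup>2)"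

definition joint_pair_closed_AFO :: "'a::complex_inner set \<Rightarrow> ('a \<Rightarrow> 'a) \<Rightarrow> ('a \<Rightarrow> 'a) \<Rightarrow> bool" where
  "joint_pair_closed_AFO D T Tt \<longleftrightarrow> joint_pair_AFO D T Tt \<and> closed_op D T \<and> closed_op D Tt"

definition bform :: "('a::complex_inner \<Rightarrow> 'a) \<Rightarrow> ('a \<Rightarrow> 'a) \<Rightarrow> 'a \<Rightarrow> 'a \<Rightarrow> complex" where
  "bform T1 Tt1 u v = cinner (T1 u) v - cinner u (Tt1 v)"

definition bperp :: "'a::complex_inner set \<Rightarrow> ('a \<Rightarrow> 'a) \<Rightarrow> ('a \<Rightarrow> 'a) \<Rightarrow> 'a set \<Rightarrow> 'a set" where
  "bperp W T1 Tt1 S = {u \<in> W. \<forall>v\<in>S. bform T1 Tt1 u v = 0}"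

definition sum3 :: "'a::plus set \<Rightarrow> 'a set \<Rightarrow> 'a set \<Rightarrow> 'a set" where
  "sum3 A B C = {a + b + c | a b c. a \<in> A \<and> b \<in> B \<and> c \<in> C}"

end

theory Submission
  imports Defs
begin

lemma cinner_zero_left[simp]: "cinner (0::'a::complex_inner) y = 0"
proof -
  have "cinner (0 + 0::'a) y = cinner 0 y + cinner 0 y" by (rule cinner_add_left)
  then show ?thesis by simp
qed

lemma cinner_add_right: "cinner (x::'a::complex_inner) (y + z) = cinner x y + cinner x z"
  by (metis cinner_add_left cinner_commute complex_cnj_add)

lemma cinner_scaleC_right: "cinner (x::'a::complex_inner) (scaleC c y) = cnj c * cinner x y"
  by (metis cinner_commute cinner_scaleC_left complex_cnj_mult)

lemma cinner_zero_right[simp]: "cinner (x::'a::complex_inner) 0 = 0"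
  by (metis cinner_commute cinner_zero_left complex_cnj_zero)

lemma cinner_minus_left: "cinner (- x::'a::complex_inner) y = - cinner x y"
  by (metis add.right_inverse add_eq_0_iff cinner_add_left cinner_zero_left)

lemma cinner_diff_left: "cinner ((x::'a::complex_inner) - z) y = cinner x y - cinner z y"
  by (simp only: diff_conv_add_uminus cinner_add_left cinner_minus_left)

lemma cinner_minus_right: "cinner (x::'a::complex_inner) (- y) = - cinner x y"
  by (metis cinner_commute cinner_minus_left complex_cnj_minus)

lemma cinner_diff_right: "cinner (x::'a::complex_inner) (y - z) = cinner x y - cinner x z"
  by (simp only: diff_conv_add_uminus cinner_add_right cinner_minus_right)

lemma cinner_scaleR_left: "cinner (scaleR r (x::'a::complex_inner)) y = complex_of_real r * cinner x y"
  by (simp add: scaleR_scaleC cinner_scaleC_left)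

lemma cinner_scaleR_right: "cinner (x::'a::complex_inner) (scaleR r y) = complex_of_real r * cinner x y"
  by (simp add: scaleR_scaleC cinner_scaleC_right)

lemma cinner_self_Im: "Im (cinner (x::'a::complex_inner) x) = 0"
  by (metis cinner_commute cnj.simps(2) equation_minus_iff neg_equal_zero)

lemma Re_cinner_self: "Re (cinner (x::'a::complex_inner) x) = (norm x)^2"
  by (simp add: norm_eq_sqrt_cinner cinner_ge_zero)

lemma cinner_self_norm: "cinner (x::'a::complex_inner) x = complex_of_real ((norm x)^2)"
  by (rule complex_eqI) (simp_all add: Re_cinner_self cinner_self_Im del: of_real_power)


lemma cauchy_schwarz: "cmod (cinner (x::'a::complex_inner) y) \<le> norm x * norm y"
proof (cases "y = 0")
  case True then show ?thesis by simp
next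
  case False
  define a where "a = cinner x y"
  define n where "n = (norm y)^2"
  have n: "n > 0" using False by (simp add: n_def)
  define t where "t = a / complex_of_real n"
  have yy: "cinner y y = complex_of_real n" by (simp add: n_def cinner_self_norm del: of_real_power)
  have yx: "cinner y x = cnj a" by (simp add: a_def cinner_commute[of y x])
  have e1: "cinner (x - scaleC t y) (x - scaleC t y)
     = cinner x x - cnj t * a - (t * cnj a - t * cnj t * complex_of_real n)"
    by (simp only: cinner_diff_left cinner_diff_right cinner_scaleC_left cinner_scaleC_right yy yx a_def) (simp add: algebra_simps)
  have e2: "cnj t * a = a * cnj a / complex_of_real n" "t * cnj a = a * cnj a / complex_of_real n"
     "t * cnj t * complex_of_real n = a * cnj a / complex_of_real n"
    using n by (simp_all add: t_def)
  have "0 \<le> Re (cinner (x - scaleC t y) (x - scaleC t y))"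
    by (rule cinner_ge_zero)
  then have "0 \<le> Re (cinner x x) - Re (a * cnj a) / n"
    unfolding e1 e2 by simp
  then have "(cmod a)^2 / n \<le> (norm x)^2"
    by (simp add: Re_cinner_self complex_mult_cnj cmod_power2 del: of_real_power)
  then have "(cmod a)^2 \<le> (norm x)^2 * n"
    using n by (simp add: divide_le_eq)
  also have "\<dots> = (norm x * norm y)^2" by (simp add: n_def power_mult_distrib)
  finally have "(cmod a)^2 \<le> (norm x * norm y)^2" .
  then show ?thesis unfolding a_def
    by (rule power2_le_imp_le) simp
qed


lemma scaleC_zero_left[simp]: "scaleC 0 (x::'a::complex_inner) = 0"
  by (metis scaleR_scaleC scaleR_zero_left of_real_0)

lemma scaleC_zero_right[simp]: "scaleC c (0::'a::complex_inner) = 0"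
  by (metis add_0 add_cancel_right_right scaleC_add_right)

lemma scaleC_minus1: "scaleC (-1) (x::'a::complex_inner) = - x"
proof -
  have "scaleC 1 x + scaleC (-1) x = 0"
    by (metis scaleC_add_left scaleC_zero_left add.right_inverse)
  then show ?thesis by (simp add: scaleC_one eq_neg_iff_add_eq_0 add.commute)
qed

lemma scaleC_diff_right: "scaleC c ((x::'a::complex_inner) - y) = scaleC c x - scaleC c y"
proof -
  have "scaleC c (x - y) + scaleC c y = scaleC c x"
    by (metis scaleC_add_right diff_add_cancel)
  then show ?thesis by (metis add_diff_cancel)
qed

lemma csubspace_diff: "csubspace S \<Longrightarrow> x \<in> S \<Longrightarrow> y \<in> S \<Longrightarrow> x - y \<in> S"
  unfolding csubspace_def by (metis diff_conv_add_uminus scaleC_minus1)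

lemma csubspace_scaleR: "csubspace S \<Longrightarrow> x \<in> S \<Longrightarrow> scaleR r x \<in> S"
  unfolding csubspace_def by (simp add: scaleR_scaleC)

lemma clinear_op_diff: "clinear_op D T \<Longrightarrow> x \<in> D \<Longrightarrow> y \<in> D \<Longrightarrow> T (x - y) = T x - T y"
  unfolding clinear_op_def csubspace_def
  by (metis diff_conv_add_uminus scaleC_minus1)

lemma bb_cinner: "bounded_bilinear (cinner :: 'a::complex_inner \<Rightarrow> 'a \<Rightarrow> complex)"
proof
  show "\<exists>K. \<forall>a b::'a. norm (cinner a b) \<le> norm a * norm b * K"
    by (rule exI[of _ 1]) (simp add: cauchy_schwarz)
qed (simp_all add: cinner_add_left cinner_add_right cinner_scaleR_left cinner_scaleR_right scaleR_conv_of_real)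

lemma continuous_on_cinner[continuous_intros]:
  "continuous_on S f \<Longrightarrow> continuous_on S g \<Longrightarrow> continuous_on S (\<lambda>x. cinner (f x :: 'a::complex_inner) (g x))"
  by (rule bounded_bilinear.continuous_on[OF bb_cinner])

lemma tendsto_cinner[tendsto_intros]:
  "(f \<longlongrightarrow> a) F \<Longrightarrow> (g \<longlongrightarrow> b) F \<Longrightarrow> ((\<lambda>x. cinner (f x :: 'a::complex_inner) (g x)) \<longlongrightarrow> cinner a b) F"
  by (rule bounded_bilinear.tendsto[OF bb_cinner])

lemma norm_scaleC: "norm (scaleC c (x::'a::complex_inner)) = cmod c * norm x"
proof -
  have "(norm (scaleC c x))^2 = Re (cinner (scaleC c x) (scaleC c x))" by (simp add: Re_cinner_self)
  also have "\<dots> = Re ((c * cnj c) * cinner x x)" by (simp only: cinner_scaleC_left cinner_scaleC_right mult.assoc mult.left_commute)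
  also have "\<dots> = (cmod c * norm x)^2"
    by (simp only: complex_norm_square[symmetric] cinner_self_norm) (simp add: power_mult_distrib)
  finally show ?thesis by (simp add: power2_eq_iff_nonneg)
qed

lemma bounded_linear_scaleC: "bounded_linear (scaleC c :: 'a::complex_inner \<Rightarrow> 'a)"
proof (rule bounded_linear_intro[where K="cmod c"])
  show "scaleC c (x + y) = scaleC c x + scaleC c y" for x y :: 'a by (rule scaleC_add_right)
  show "scaleC c (scaleR r x) = scaleR r (scaleC c x)" for r and x :: 'a
    by (simp add: scaleR_scaleC scaleC_scaleC mult.commute)
  show "norm (scaleC c x) \<le> norm x * cmod c" for x :: 'a by (simp add: norm_scaleC mult.commute)
qed

lemma continuous_on_scaleC[continuous_intros]:
  "continuous_on S f \<Longrightarrow> continuous_on S (\<lambda>x. scaleC c (f x :: 'a::complex_inner))"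
  by (rule bounded_linear.continuous_on[OF bounded_linear_scaleC])

lemma dense_closed_UNIV: "closure D = UNIV \<Longrightarrow> closed S \<Longrightarrow> D \<subseteq> S \<Longrightarrow> x \<in> S"
  by (metis UNIV_I closure_minimal subsetD)

lemma dense_zero:
  fixes a :: "'a::complex_inner"
  assumes "closure D = UNIV" "\<And>u. u \<in> D \<Longrightarrow> cinner u a = 0"
  shows "a = 0"
proof -
  have "closed {u. cinner u a = 0}"
    by (rule closed_Collect_eq) (intro continuous_intros)+
  then have "a \<in> {u. cinner u a = 0}"
    using assms by (intro dense_closed_UNIV[of D]) auto
  then show ?thesis by (simp add: cinner_eq_zero_iff)
qed

lemma adj_eq:
  assumes "densely_defined D" "\<And>u. u \<in> D \<Longrightarrow> cinner (T u) v = cinner u w"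
  shows "v \<in> adj_dom D T" "adj D T v = w"
proof -
  show "v \<in> adj_dom D T" using assms(2) unfolding adj_dom_def by blast
  show "adj D T v = w" unfolding adj_def
  proof (rule the_equality)
    show "\<forall>u\<in>D. cinner (T u) v = cinner u w" using assms(2) by blast
    fix w' assume "\<forall>u\<in>D. cinner (T u) v = cinner u w'"
    then have "\<And>u. u \<in> D \<Longrightarrow> cinner u (w' - w) = 0"
      using assms(2) by (simp add: cinner_diff_right)
    then have "w' - w = 0" using assms(1) dense_zero[of D "w' - w"] unfolding densely_defined_def by blast
    then show "w' = w" by simp
  qed
qed

lemma adj_prop:
  assumes "densely_defined D" "v \<in> adj_dom D T" "u \<in> D"
  shows "cinner (T u) v = cinner u (adj D T v)"
proof -
  obtain w where w: "\<forall>u\<in>D. cinner (T u) v = cinner u w" using assms(2) unfolding adj_dom_def by blast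
  then have "adj D T v = w" using adj_eq(2)[OF assms(1)] by blast
  then show ?thesis using w assms(3) by simp
qed


lemma parallelogram:
  "(norm ((a::'a::complex_inner) + b))^2 + (norm (a - b))^2 = 2*(norm a)^2 + 2*(norm b)^2"
  by (simp only: Re_cinner_self[symmetric] cinner_add_left cinner_add_right cinner_diff_left cinner_diff_right) simp

lemma aux_re:
  "Re (Q - cnj (complex_of_real s * a) * a - (complex_of_real s * a) * cnj a
      + (complex_of_real s * a) * cnj (complex_of_real s * a) * complex_of_real R)
   = Re Q - 2 * s * (cmod a)^2 + s^2 * (cmod a)^2 * R"
  unfolding cmod_power2 by (simp add: algebra_simps power2_eq_square)

lemma expand_sq:
  fixes q m :: "'a::complex_inner"
  defines "a \<equiv> cinner q m"
  shows "Re (cinner (q - scaleC (complex_of_real s * a) m) (q - scaleC (complex_of_real s * a) m))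
     = (norm q)^2 - 2 * s * (cmod a)^2 + s^2 * (cmod a)^2 * (norm m)^2"
proof -
  have ma: "cinner m q = cnj a" by (simp add: a_def cinner_commute[of m q])
  have "cinner (q - scaleC (complex_of_real s * a) m) (q - scaleC (complex_of_real s * a) m)
    = cinner q q - cnj (complex_of_real s * a) * a - (complex_of_real s * a) * cnj a
      + (complex_of_real s * a) * cnj (complex_of_real s * a) * cinner m m"
    by (simp only: cinner_diff_left cinner_diff_right cinner_scaleC_left cinner_scaleC_right ma a_def[symmetric])
       (simp add: algebra_simps)
  also have "cinner m m = complex_of_real ((norm m)^2)" by (rule cinner_self_norm)
  finally show ?thesis
    by (simp only: aux_re Re_cinner_self)
qed

lemma projection:
  fixes M :: "'a::{complex_inner,banach} set"
  assumes sub: "csubspace M" and cl: "closed M"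
  shows "\<exists>p\<in>M. \<forall>m\<in>M. cinner (y - p) m = 0"
proof -
  define d where "d = Inf ((\<lambda>m. (norm (y - m))^2) ` M)"
  have M0: "0 \<in> M" using sub by (simp add: csubspace_def)
  have bdd: "bdd_below ((\<lambda>m. (norm (y - m))^2) ` M)" by (rule bdd_belowI[of _ 0]) auto
  have dle: "d \<le> (norm (y - m))^2" if "m \<in> M" for m
    unfolding d_def by (rule cInf_lower) (use that bdd in auto)
  have "\<exists>m\<in>M. (norm (y - m))^2 < d + inverse (real (Suc n))" for n
  proof -
    have "Inf ((\<lambda>m. (norm (y - m))^2) ` M) < d + inverse (real (Suc n))" by (simp add: d_def)
    then show ?thesis using cInf_less_iff[OF _ bdd] M0 by auto
  qed
  then obtain s where s: "\<And>n. s n \<in> M" "\<And>n. (norm (y - s n))^2 < d + inverse (real (Suc n))"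
    by metis
  have mid: "(norm (s m - s n))^2 \<le> 2 * inverse (real (Suc m)) + 2 * inverse (real (Suc n))" for m n
  proof -
    have e1: "(y - s m) + (y - s n) = scaleR 2 (y - scaleR (1/2) (s m + s n))"
      by (simp add: scaleR_right_diff_distrib scaleR_2)
    have "scaleR (1/2) (s m + s n) \<in> M"
      using csubspace_scaleR[OF sub] s(1) sub unfolding csubspace_def by blast
    then have d1: "d \<le> (norm (y - scaleR (1/2) (s m + s n)))^2" by (rule dle)
    have n1: "(norm ((y - s m) + (y - s n)))^2 = 4 * (norm (y - scaleR (1/2) (s m + s n)))^2"
      unfolding e1 by (simp add: power_mult_distrib)
    have n2: "(norm ((y - s m) - (y - s n)))^2 = (norm (s m - s n))^2"
      by (simp add: norm_minus_commute)
    have "(norm ((y - s m) + (y - s n)))^2 + (norm ((y - s m) - (y - s n)))^2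
       = 2 * (norm (y - s m))^2 + 2 * (norm (y - s n))^2" by (rule parallelogram)
    then show ?thesis using n1 n2 d1 s(2)[of m] s(2)[of n] by linarith
  qed
  have "Cauchy s"
  proof (rule metric_CauchyI)
    fix e :: real assume e: "0 < e"
    then obtain N where N: "inverse (real (Suc N)) < e^2 / 4"
      using reals_Archimedean[of "e^2/4"] by auto
    have "dist (s m) (s n) < e" if "m \<ge> N" "n \<ge> N" for m n
    proof -
      have i1: "inverse (real (Suc m)) \<le> inverse (real (Suc N))"
        using that by (simp add: le_imp_inverse_le)
      have i2: "inverse (real (Suc n)) \<le> inverse (real (Suc N))"
        using that by (simp add: le_imp_inverse_le)
      have "(norm (s m - s n))^2 < e^2" using mid[of m n] i1 i2 N by linarith
      then have "norm (s m - s n) < e" using e by (simp add: power_less_imp_less_base)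
      then show ?thesis by (simp add: dist_norm)
    qed
    then show "\<exists>M. \<forall>m\<ge>M. \<forall>n\<ge>M. dist (s m) (s n) < e" by blast
  qed
  then obtain p where sp: "s \<longlonglongrightarrow> p" using Cauchy_convergent convergent_def by blast
  have pM: "p \<in> M" using closed_sequentially[OF cl s(1) sp] .
  have np: "(norm (y - p))^2 \<le> d"
  proof (rule LIMSEQ_le)
    show "(\<lambda>n. (norm (y - s n))^2) \<longlonglongrightarrow> (norm (y - p))^2"
      by (intro tendsto_intros sp)
    show "(\<lambda>n. d + inverse (real (Suc n))) \<longlonglongrightarrow> d"
      using tendsto_add[OF tendsto_const LIMSEQ_inverse_real_of_nat, of d] by simp
    show "\<exists>N. \<forall>n\<ge>N. (norm (y - s n))^2 \<le> d + inverse (real (Suc n))"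
      using s(2) less_imp_le by blast
  qed
  have "cinner (y - p) m = 0" if mM: "m \<in> M" for m
  proof -
    define q where "q = y - p"
    define a where "a = cinner q m"
    define A where "A = (cmod a)^2"
    define M2 where "M2 = (norm m)^2"
    define s0 where "s0 = inverse (M2 + 1)"
    have M2: "M2 \<ge> 0" by (simp add: M2_def)
    have s0: "s0 > 0" using M2 by (simp add: s0_def)
    have A0: "A \<ge> 0" by (simp add: A_def)
    have "scaleC (complex_of_real s0 * a) m \<in> M" using sub mM by (simp add: csubspace_def)
    then have "p + scaleC (complex_of_real s0 * a) m \<in> M" using sub pM by (simp add: csubspace_def)
    then have "d \<le> (norm (y - (p + scaleC (complex_of_real s0 * a) m)))^2" by (rule dle)
    also have "y - (p + scaleC (complex_of_real s0 * a) m) = q - scaleC (complex_of_real s0 * a) m"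
      by (simp add: q_def)
    also have "(norm (q - scaleC (complex_of_real s0 * a) m))^2 = (norm q)^2 - 2 * s0 * A + s0^2 * A * M2"
      using expand_sq[of q s0 m] by (simp add: Re_cinner_self a_def A_def M2_def)
    finally have "d \<le> (norm q)^2 - 2 * s0 * A + s0^2 * A * M2" .
    with np have "s0 * (2 * A) \<le> s0 * (s0 * M2 * A)" unfolding q_def by (simp add: algebra_simps power2_eq_square)
    then have i1: "2 * A \<le> s0 * M2 * A" using s0 by simp
    have "s0 * M2 \<le> 1" using M2 by (simp add: s0_def field_simps)
    then have "A * (s0 * M2) \<le> A * 1" by (rule mult_left_mono[OF _ A0])
    then have "s0 * M2 * A \<le> A" by (simp add: mult.commute)
    with i1 A0 have "A = 0" by linarith
    then show ?thesis by (simp add: A_def a_def q_def)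
  qed
  with pM show ?thesis by blast
qed


lemma riesz:
  fixes g :: "'a::{complex_inner,banach} \<Rightarrow> complex"
  assumes cont: "continuous_on UNIV g" and add: "\<And>x y. g (x + y) = g x + g y"
    and hom: "\<And>c x. g (scaleC c x) = c * g x"
  shows "\<exists>w. \<forall>x. g x = cinner x w"
proof (cases "\<forall>x. g x = 0")
  case True then show ?thesis by (intro exI[of _ 0]) simp
next
  case False
  then obtain y where gy: "g y \<noteq> 0" by blast
  have g0: "g 0 = 0" using add[of 0 0] by simp
  define K where "K = {x. g x = 0}"
  have subK: "csubspace K" unfolding K_def csubspace_def using g0 add hom by simp
  have clK: "closed K" unfolding K_def by (intro closed_Collect_eq cont continuous_on_const)
  obtain p where pK: "p \<in> K" and orth: "\<forall>m\<in>K. cinner (y - p) m = 0"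
    using projection[OF subK clK] by blast
  define q where "q = y - p"
  have "g y = g q + g p" using add[of q p] by (simp add: q_def)
  then have gq: "g q = g y" using pK by (simp add: K_def)
  then have "q \<noteq> 0" using gy g0 by auto
  then have qq: "cinner q q \<noteq> 0" by (simp add: cinner_eq_zero_iff)
  define w where "w = scaleC (cnj (g q / cinner q q)) q"
  show ?thesis
  proof (intro exI allI)
    fix x
    define z where "z = x - scaleC (g x / g q) q"
    have "g x = g z + g (scaleC (g x / g q) q)" using add[of z "scaleC (g x / g q) q"] by (simp add: z_def)
    then have "g z = 0" using hom gq gy by simp
    then have "cinner q z = 0" using orth by (simp add: K_def q_def)
    then have "cinner z q = 0" by (metis cinner_commute complex_cnj_zero)
    then have xq: "cinner x q = (g x / g q) * cinner q q"
      by (simp add: z_def cinner_diff_left cinner_scaleC_left)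
    show "g x = cinner x w"
      unfolding w_def cinner_scaleC_right xq using qq gq gy by simp
  qed
qed

lemma extend_op:
  fixes B :: "'a::{complex_inner,banach} \<Rightarrow> 'a"
  assumes dense: "closure D = UNIV" and lin: "clinear_op D B"
    and bnd: "\<And>x. x \<in> D \<Longrightarrow> norm (B x) \<le> C * norm x"
  obtains Bb where "continuous_on UNIV Bb" "\<And>x. x \<in> D \<Longrightarrow> Bb x = B x"
    "\<And>x y. Bb (x + y) = Bb x + Bb y" "\<And>c x. Bb (scaleC c x) = scaleC c (Bb x)"
proof -
  have sub: "csubspace D" using lin by (simp add: clinear_op_def)
  have "(max C 0)-lipschitz_on D B"
  proof (rule lipschitz_onI)
    fix x y assume xy: "x \<in> D" "y \<in> D"
    have "dist (B x) (B y) = norm (B (x - y))" using clinear_op_diff[OF lin xy] by (simp add: dist_norm)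
    also have "\<dots> \<le> C * norm (x - y)" using bnd csubspace_diff[OF sub xy] by blast
    also have "\<dots> \<le> max C 0 * norm (x - y)" by (simp add: mult_right_mono)
    finally show "dist (B x) (B y) \<le> max C 0 * dist x y" by (simp add: dist_norm)
  qed simp
  then have uc: "uniformly_continuous_on D B" by (rule lipschitz_on_uniformly_continuous)
  obtain g where g1: "uniformly_continuous_on (closure D) g" and g2: "\<And>x. x \<in> D \<Longrightarrow> B x = g x"
    using uniformly_continuous_on_extension_on_closure[OF uc] by metis
  have cont: "continuous_on UNIV g" using g1 dense uniformly_continuous_imp_continuous by metis
  have addg: "g (x + y) = g x + g y" for x y
  proof -
    let ?S = "{z::'a\<times>'a. g (fst z + snd z) = g (fst z) + g (snd z)}"
    have c1: "continuous_on UNIV (\<lambda>z::'a\<times>'a. g (fst z + snd z))"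
      by (rule continuous_on_compose2[OF cont]) (auto intro!: continuous_intros)
    have c2: "continuous_on UNIV (\<lambda>z::'a\<times>'a. g (fst z))"
      by (rule continuous_on_compose2[OF cont]) (auto intro!: continuous_intros)
    have c3: "continuous_on UNIV (\<lambda>z::'a\<times>'a. g (snd z))"
      by (rule continuous_on_compose2[OF cont]) (auto intro!: continuous_intros)
    have "closed ?S" by (intro closed_Collect_eq c1 continuous_on_add c2 c3)
    moreover have "D \<times> D \<subseteq> ?S"
      using lin g2 sub unfolding clinear_op_def csubspace_def by auto
    moreover have "closure (D \<times> D) = UNIV" by (simp add: closure_Times dense)
    ultimately have "(x, y) \<in> ?S" by (intro dense_closed_UNIV[of "D \<times> D"])
    then show ?thesis by simp
  qed
  have homg: "g (scaleC c x) = scaleC c (g x)" for c x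
  proof -
    let ?S = "{x. g (scaleC c x) = scaleC c (g x)}"
    have c1: "continuous_on UNIV (\<lambda>x. g (scaleC c x))"
      by (rule continuous_on_compose2[OF cont]) (auto intro!: continuous_intros)
    have "closed ?S" by (intro closed_Collect_eq c1 continuous_on_scaleC cont)
    moreover have "D \<subseteq> ?S"
      using lin g2 sub unfolding clinear_op_def csubspace_def by auto
    ultimately have "x \<in> ?S" using dense by (intro dense_closed_UNIV[of D])
    then show ?thesis by simp
  qed
  show ?thesis using that[OF cont _ addg homg] g2 by metis
qed

lemma closed_range:
  fixes T :: "'a::{complex_inner,banach} \<Rightarrow> 'a"
  assumes lin: "clinear_op D T" and cl: "closed_op D T" and mu: "\<mu> > 0"
    and low: "\<And>x. x \<in> D \<Longrightarrow> \<mu> * norm x \<le> norm (T x)"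
  shows "closed (T ` D)"
  unfolding closed_sequential_limits
proof (intro allI impI, elim conjE)
  fix x l assume xs: "\<forall>n. x n \<in> T ` D" and lim: "x \<longlonglongrightarrow> l"
  have sub: "csubspace D" using lin by (simp add: clinear_op_def)
  have "\<forall>n. \<exists>y. y \<in> D \<and> x n = T y" using xs by blast
  then obtain \<phi> where \<phi>0: "\<forall>n. \<phi> n \<in> D \<and> x n = T (\<phi> n)" by (rule choice[THEN exE]) blast
  then have \<phi>: "\<And>n. \<phi> n \<in> D" "\<And>n. x n = T (\<phi> n)" by auto
  have cx: "Cauchy x" using lim by (rule LIMSEQ_imp_Cauchy)
  have "Cauchy \<phi>"
  proof (rule metric_CauchyI)
    fix e :: real assume e: "e > 0"
    have me: "\<mu> * e > 0" using mu e by simp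
    obtain M where M: "\<forall>m\<ge>M. \<forall>n\<ge>M. dist (x m) (x n) < \<mu> * e"
      using metric_CauchyD[OF cx me] by blast
    show "\<exists>M. \<forall>m\<ge>M. \<forall>n\<ge>M. dist (\<phi> m) (\<phi> n) < e"
    proof (intro exI allI impI)
      fix m n assume mn: "m \<ge> M" "n \<ge> M"
      have h1: "dist (x m) (x n) < \<mu> * e" using M mn by blast
      have h2: "dist (x m) (x n) = norm (T (\<phi> m - \<phi> n))"
        unfolding dist_norm \<phi>(2) clinear_op_diff[OF lin \<phi>(1) \<phi>(1)] ..
      have h3: "\<mu> * norm (\<phi> m - \<phi> n) \<le> norm (T (\<phi> m - \<phi> n))"
        by (rule low[OF csubspace_diff[OF sub \<phi>(1) \<phi>(1)]])
      have "\<mu> * norm (\<phi> m - \<phi> n) < \<mu> * e" using h1 h2 h3 by linarith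
      then have "norm (\<phi> m - \<phi> n) < e" using mu by simp
      then show "dist (\<phi> m) (\<phi> n) < e" by (simp add: dist_norm)
    qed
  qed
  then obtain \<psi> where \<psi>: "\<phi> \<longlonglongrightarrow> \<psi>" using Cauchy_convergent convergent_def by blast
  have xe: "x = (\<lambda>n. T (\<phi> n))" using \<phi>(2) by auto
  have "(\<lambda>n. (\<phi> n, T (\<phi> n))) \<longlonglongrightarrow> (\<psi>, l)" using tendsto_Pair[OF \<psi>] lim xe by simp
  moreover have "(\<phi> n, T (\<phi> n)) \<in> {(x, T x) | x. x \<in> D}" for n using \<phi>(1) by blast
  ultimately have "(\<psi>, l) \<in> {(x, T x) | x. x \<in> D}"
    using closed_sequentially[OF cl[unfolded closed_op_def], of "\<lambda>n. (\<phi> n, T (\<phi> n))"] by blast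
  then obtain z where "z \<in> D" "(\<psi>, l) = (z, T z)" by blast
  then show "l \<in> T ` D" by simp
qed


theorem lemma3p7:
  fixes W0 :: "'h::{complex_inner, banach} set"
    and T0 Tt0 :: "'h \<Rightarrow> 'h"
  assumes "joint_pair_closed_AFO W0 T0 Tt0"
  defines "T1 \<equiv> adj W0 Tt0"
    and "Tt1 \<equiv> adj W0 T0"
    and "W \<equiv> adj_dom W0 Tt0"
  shows "bperp W T1 Tt1 (bperp W T1 Tt1
           (sum3 W0 (op_kernel W T1) (op_kernel (adj_dom W0 T0) Tt1))) = W"
proof -
  define Wt where "Wt = adj_dom W0 T0"
  have jp: "joint_pair_AFO W0 T0 Tt0" and clT0: "closed_op W0 T0"
    using assms(1) unfolding joint_pair_closed_AFO_def by auto
  have lin0: "clinear_op W0 T0" and lint: "clinear_op W0 Tt0" and dd: "densely_defined W0"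
    and sym: "\<And>\<phi> \<psi>. \<phi> \<in> W0 \<Longrightarrow> \<psi> \<in> W0 \<Longrightarrow> cinner (T0 \<phi>) \<psi> = cinner \<phi> (Tt0 \<psi>)"
    using jp unfolding joint_pair_AFO_def by auto
  obtain c where c: "c > 0" "\<And>\<phi>. \<phi> \<in> W0 \<Longrightarrow> norm (T0 \<phi> + Tt0 \<phi>) \<le> c * norm \<phi>"
    using jp unfolding joint_pair_AFO_def by auto
  obtain \<mu>0 where mu: "\<mu>0 > 0" "\<And>\<phi>. \<phi> \<in> W0 \<Longrightarrow> Re (cinner (T0 \<phi> + Tt0 \<phi>) \<phi>) \<ge> 2 * \<mu>0 * (norm \<phi>)\<^sup>2"
    using jp unfolding joint_pair_AFO_def by auto
  have dense: "closure W0 = UNIV" using dd by (simp add: densely_defined_def)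
  have sub0: "csubspace W0" using lin0 by (simp add: clinear_op_def)
  have W00: "0 \<in> W0" using sub0 by (simp add: csubspace_def)

  have F1: "\<phi> \<in> W \<and> T1 \<phi> = T0 \<phi>" if "\<phi> \<in> W0" for \<phi>
  proof -
    have "cinner (Tt0 u) \<phi> = cinner u (T0 \<phi>)" if "u \<in> W0" for u
      by (metis cinner_commute sym \<open>\<phi> \<in> W0\<close> that)
    then show ?thesis using adj_eq[OF dd, of Tt0 \<phi> "T0 \<phi>"] unfolding W_def T1_def by blast
  qed
  have F2: "\<phi> \<in> Wt \<and> Tt1 \<phi> = Tt0 \<phi>" if "\<phi> \<in> W0" for \<phi>
    using adj_eq[OF dd, of T0 \<phi> "Tt0 \<phi>"] sym that unfolding Wt_def Tt1_def by blast
  have F3: "cinner (Tt0 u) v = cinner u (T1 v)" if "v \<in> W" "u \<in> W0" for u v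
    using adj_prop[OF dd] that unfolding W_def T1_def by blast
  have F3': "cinner (T0 u) v = cinner u (Tt1 v)" if "v \<in> Wt" "u \<in> W0" for u v
    using adj_prop[OF dd] that unfolding Wt_def Tt1_def by blast
  have F4: "v1 - v2 \<in> W \<and> T1 (v1 - v2) = T1 v1 - T1 v2" if "v1 \<in> W" "v2 \<in> W" for v1 v2
  proof -
    have "cinner (Tt0 u) (v1 - v2) = cinner u (T1 v1 - T1 v2)" if "u \<in> W0" for u
      using F3 \<open>v1 \<in> W\<close> \<open>v2 \<in> W\<close> that by (simp add: cinner_diff_right)
    then show ?thesis using adj_eq[OF dd, of Tt0 "v1 - v2" "T1 v1 - T1 v2"] unfolding W_def T1_def by blast
  qed
  have F5: "0 \<in> W \<and> T1 0 = 0"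
    using adj_eq[OF dd, of Tt0 0 0] unfolding W_def T1_def by simp
  have F5': "0 \<in> Wt \<and> Tt1 0 = 0"
    using adj_eq[OF dd, of T0 0 0] unfolding Wt_def Tt1_def by simp
  define V where "V = sum3 W0 (op_kernel W T1) (op_kernel Wt Tt1)"
  have kerTt1V: "k \<in> V" if "k \<in> op_kernel Wt Tt1" for k
  proof -
    have "0 \<in> op_kernel W T1" using F5 by (simp add: op_kernel_def)
    then have "0 + 0 + k \<in> V" unfolding V_def sum3_def using W00 that by blast
    then show ?thesis by simp
  qed
  have kerT1V: "k \<in> V" if "k \<in> op_kernel W T1" for k
  proof -
    have "0 \<in> op_kernel Wt Tt1" using F5' by (simp add: op_kernel_def)
    then have "0 + k + 0 \<in> V" unfolding V_def sum3_def using W00 that by blast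
    then show ?thesis by simp
  qed

  have lowT0: "\<mu>0 * norm \<phi> \<le> norm (T0 \<phi>)" if "\<phi> \<in> W0" for \<phi>
  proof -
    have "cinner (Tt0 \<phi>) \<phi> = cnj (cinner (T0 \<phi>) \<phi>)"
      by (metis cinner_commute sym that)
    then have "Re (cinner (T0 \<phi> + Tt0 \<phi>) \<phi>) = 2 * Re (cinner (T0 \<phi>) \<phi>)"
      by (simp add: cinner_add_left)
    then have "\<mu>0 * (norm \<phi>)^2 \<le> Re (cinner (T0 \<phi>) \<phi>)" using mu(2)[OF that] by simp
    also have "\<dots> \<le> cmod (cinner (T0 \<phi>) \<phi>)" by (rule complex_Re_le_cmod)
    also have "\<dots> \<le> norm (T0 \<phi>) * norm \<phi>" by (rule cauchy_schwarz)
    finally have "(\<mu>0 * norm \<phi>) * norm \<phi> \<le> norm (T0 \<phi>) * norm \<phi>"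
      by (simp add: power2_eq_square mult.assoc)
    then show ?thesis
      by (cases "norm \<phi> = 0") (auto simp: mult_le_cancel_right)
  qed
  have closedR: "closed (T0 ` W0)"
    by (rule closed_range[OF lin0 clT0 mu(1) lowT0])
  have subR: "csubspace (T0 ` W0)"
  proof -
    have "T0 0 = 0" using lin0 W00 unfolding clinear_op_def by (metis scaleC_zero_left)
    then have "0 \<in> T0 ` W0" using W00 by (metis image_eqI)
    moreover have "a + b \<in> T0 ` W0" if hab: "a \<in> T0 ` W0" "b \<in> T0 ` W0" for a b
    proof -
      obtain x y where "x \<in> W0" "y \<in> W0" "a = T0 x" "b = T0 y" using hab by blast
      then show ?thesis using lin0 sub0 unfolding clinear_op_def csubspace_def by (metis image_eqI)
    qed
    moreover have "scaleC z a \<in> T0 ` W0" if ha: "a \<in> T0 ` W0" for a z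
    proof -
      obtain x where "x \<in> W0" "a = T0 x" using ha by blast
      then show ?thesis using lin0 sub0 unfolding clinear_op_def csubspace_def by (metis image_eqI)
    qed
    ultimately show ?thesis unfolding csubspace_def by blast
  qed
  have LemA: "y \<in> T0 ` W0" if hy: "\<And>k. k \<in> op_kernel Wt Tt1 \<Longrightarrow> cinner y k = 0" for y
  proof -
    obtain p where pR: "p \<in> T0 ` W0" and orth: "\<forall>m\<in>T0 ` W0. cinner (y - p) m = 0"
      using projection[OF subR closedR] by blast
    define q where "q = y - p"
    have "cinner (T0 u) q = cinner u 0" if "u \<in> W0" for u
    proof -
      have "cinner q (T0 u) = 0" using orth that by (simp add: q_def)
      then show ?thesis by (metis cinner_commute complex_cnj_zero cinner_zero_right)
    qed
    then have "q \<in> Wt \<and> Tt1 q = 0" using adj_eq[OF dd, of T0 q 0] unfolding Wt_def Tt1_def by blast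
    then have "q \<in> op_kernel Wt Tt1" by (simp add: op_kernel_def)
    then have yq: "cinner y q = 0" by (rule hy)
    have "cinner q p = 0" using orth pR unfolding q_def by blast
    then have pq: "cinner p q = 0" by (metis cinner_commute complex_cnj_zero)
    have "cinner q q = 0" using yq pq by (simp add: q_def cinner_diff_left)
    then have "q = 0" by (simp add: cinner_eq_zero_iff)
    then show ?thesis using pR by (simp add: q_def)
  qed

  have linB: "clinear_op W0 (\<lambda>x. T0 x + Tt0 x)"
    using lin0 lint unfolding clinear_op_def by (simp add: scaleC_add_right algebra_simps)
  obtain Bb where Bb: "continuous_on UNIV Bb" "\<And>x. x \<in> W0 \<Longrightarrow> Bb x = T0 x + Tt0 x"
    "\<And>x y. Bb (x + y) = Bb x + Bb y" "\<And>z x. Bb (scaleC z x) = scaleC z (Bb x)"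
    using extend_op[OF dense linB c(2)] by metis
  have coerB: "2 * \<mu>0 * (norm x)\<^sup>2 \<le> Re (cinner (Bb x) x)" for x
  proof -
    let ?S = "{x. 2 * \<mu>0 * (norm x)\<^sup>2 \<le> Re (cinner (Bb x) x)}"
    have "closed ?S"
      by (intro closed_Collect_le continuous_intros Bb(1))
    moreover have "W0 \<subseteq> ?S" using mu(2) Bb(2) by auto
    ultimately have "x \<in> ?S" using dense by (intro dense_closed_UNIV[of W0])
    then show ?thesis by simp
  qed
  have LemB: "k \<in> Wt \<and> 2 * \<mu>0 * (norm k)\<^sup>2 \<le> Re (cinner k (Tt1 k))"
    if kW: "k \<in> W" and kT: "T1 k = 0" for k
  proof -
    define g where "g x = cinner (Bb x) k" for x
    have gc: "continuous_on UNIV g" unfolding g_def by (intro continuous_intros Bb(1))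
    have ga: "g (x + y) = g x + g y" for x y by (simp add: g_def Bb(3) cinner_add_left)
    have gh: "g (scaleC z x) = z * g x" for z x by (simp add: g_def Bb(4) cinner_scaleC_left)
    obtain w where w: "\<And>x. g x = cinner x w" using riesz[OF gc ga gh] by blast
    have "cinner (T0 u) k = cinner u w" if "u \<in> W0" for u
    proof -
      have "cinner u w = cinner (T0 u + Tt0 u) k" using w[of u] Bb(2)[OF that] by (simp add: g_def)
      also have "\<dots> = cinner (T0 u) k + cinner u (T1 k)" using F3[OF kW that] by (simp add: cinner_add_left)
      finally show ?thesis using kT by simp
    qed
    then have "k \<in> Wt \<and> Tt1 k = w" using adj_eq[OF dd, of T0 k w] unfolding Wt_def Tt1_def by blast
    moreover have "cinner k w = cinner (Bb k) k" using w[of k] by (simp add: g_def)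
    ultimately show ?thesis using coerB[of k] by simp
  qed

  have inW0: "x \<in> W0" if xW: "x \<in> W" and hx: "\<And>v. v \<in> V \<Longrightarrow> bform T1 Tt1 x v = 0" for x
  proof -
    have "cinner (T1 x) k = 0" if "k \<in> op_kernel Wt Tt1" for k
      using hx[OF kerTt1V[OF that]] that by (simp add: bform_def op_kernel_def)
    then have "T1 x \<in> T0 ` W0" by (rule LemA)
    then obtain w where wW0: "w \<in> W0" and Tw: "T1 x = T0 w" by blast
    define k where "k = x - w"
    have wW: "w \<in> W" "T1 w = T0 w" using F1[OF wW0] by auto
    have kW: "k \<in> W" and Tk: "T1 k = 0" using F4[OF xW wW(1)] Tw wW(2) by (auto simp: k_def)
    then have "k \<in> op_kernel W T1" by (simp add: op_kernel_def)
    then have bxk: "bform T1 Tt1 x k = 0" by (rule hx[OF kerT1V])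
    from LemB[OF kW Tk] have kWt: "k \<in> Wt" and kco: "2 * \<mu>0 * (norm k)\<^sup>2 \<le> Re (cinner k (Tt1 k))"
      by auto
    have "cinner (T1 x) k = cinner w (Tt1 k)" using Tw F3'[OF kWt wW0] by simp
    have "cinner (x - w) (Tt1 k) = cinner x (Tt1 k) - cinner w (Tt1 k)" by (rule cinner_diff_left)
    then have kd: "cinner k (Tt1 k) = cinner x (Tt1 k) - cinner w (Tt1 k)" by (simp only: k_def[symmetric])
    have "bform T1 Tt1 x k = cinner (T1 x) k - cinner x (Tt1 k)" by (simp add: bform_def)
    then have "cinner k (Tt1 k) = 0" using bxk kd \<open>cinner (T1 x) k = cinner w (Tt1 k)\<close> by simp
    then have "2 * \<mu>0 * (norm k)\<^sup>2 \<le> 2 * \<mu>0 * 0" using kco by simp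
    then have "(norm k)\<^sup>2 \<le> 0" by (rule mult_left_le_imp_le) (use mu(1) in simp)
    then have "k = 0" by simp
    then show ?thesis using wW0 by (simp add: k_def)
  qed

  have "bperp W T1 Tt1 (bperp W T1 Tt1 V) = W"
  proof
    show "bperp W T1 Tt1 (bperp W T1 Tt1 V) \<subseteq> W" by (auto simp: bperp_def)
    show "W \<subseteq> bperp W T1 Tt1 (bperp W T1 Tt1 V)"
    proof
      fix u assume uW: "u \<in> W"
      have "bform T1 Tt1 u x = 0" if "x \<in> bperp W T1 Tt1 V" for x
      proof -
        have xW0: "x \<in> W0" using inW0 that by (auto simp: bperp_def)
        have "cinner u (Tt1 x) = cinner u (Tt0 x)" using F2[OF xW0] by simp
        also have "\<dots> = cnj (cinner (Tt0 x) u)" by (rule cinner_commute)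
        also have "\<dots> = cnj (cinner x (T1 u))" using F3[OF uW xW0] by simp
        also have "\<dots> = cinner (T1 u) x" by (metis cinner_commute)
        finally show ?thesis by (simp add: bform_def)
      qed
      then show "u \<in> bperp W T1 Tt1 (bperp W T1 Tt1 V)" using uW by (simp add: bperp_def)
    qed
  qed
  then show ?thesis unfolding V_def Wt_def .
qed

end
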